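(* Let $F>0$ and let $\{g_n\}_{n<0}$ be real numbers with $\liminf_{n\to-\infty}|n|^{-1/2}g_n>-\sqrt{F}$. Then for every $E\in\mathbb{R}$ there is a non-trivial $\psi\in L^2((-\infty,0))$ which solves $-\psi''(x)-Fx\psi(x)=E\psi(x)$ for $x\in(-\infty,0)\setminus\mathbb{Z}$, is continuous at every negative integer $n$, and satisfies $\lim_{\epsilon\to0^+}(\psi'(n+\epsilon)-\psi'(n-\epsilon))=g_n\psi(n)$ for every negative integer $n$. *)

theory Defs
  imports "HOL-Analysis.Analysis"
begin

definition L2_neg_halfline :: "(real \<Rightarrow> real) \<Rightarrow> bool" where
  "L2_neg_halfline \<psi> \<longleftrightarrow>
     \<psi> \<in> borel_measurable (restrict_space lebesgue {..<0}) \<and>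
     set_integrable lebesgue {..<(0::real)} (\<lambda>x. (\<psi> x)\<^sup>2)"

end

theory Submission
  imports Defs
begin

fun aco :: "real \<Rightarrow> real \<Rightarrow> real \<Rightarrow> nat \<Rightarrow> real" where
  "aco F c0 c1 0 = c0"
| "aco F c0 c1 (Suc 0) = c1"
| "aco F c0 c1 (Suc (Suc 0)) = 0"
| "aco F c0 c1 (Suc (Suc (Suc k))) = - F * aco F c0 c1 k / (real (k+3) * real (k+2))"

lemma aco_bound:
  fixes F c0 c1 :: real
  shows "(aco F c0 c1 k)\<^sup>2 \<le> (c0\<^sup>2 + c1\<^sup>2 + 1) * (max 1 (F\<^sup>2)) ^ k / fact k"
proof (induction k rule: less_induct)
  case (less k)
  define D where "D = max 1 (F\<^sup>2)"
  define C where "C = c0\<^sup>2 + c1\<^sup>2 + 1"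
  have D1: "D \<ge> 1" and DF: "D \<ge> F\<^sup>2" and C0: "C \<ge> 0" by (auto simp: D_def C_def)
  show ?case
  proof (cases k)
    case 0 then show ?thesis by simp
  next
    case (Suc k1)
    show ?thesis
    proof (cases k1)
      case 0 then show ?thesis using Suc D1 C0 unfolding D_def[symmetric] C_def[symmetric]
        by (simp add: C_def) (smt (verit) D1 D_def mult_le_cancel_left1 power2_eq_square sum_power2_ge_zero)
    next
      case (Suc k2)
      show ?thesis
      proof (cases k2)
        case 0 then show ?thesis using \<open>k = Suc k1\<close> Suc by (simp add: C_def)
      next
        case (Suc j)
        have kj: "k = j + 3" using \<open>k = Suc k1\<close> \<open>k1 = Suc k2\<close> Suc by simp
        have IH: "(aco F c0 c1 j)\<^sup>2 \<le> C * D ^ j / fact j"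
          using less[of j] kj by (simp add: C_def D_def)
        have eq: "(aco F c0 c1 k)\<^sup>2 = F\<^sup>2 * (aco F c0 c1 j)\<^sup>2 / ((real j+3)^2 * (real j+2)^2)"
          using kj by (simp add: eval_nat_numeral power_divide power_mult_distrib algebra_simps)
        have pos: "(real j+3)^2 * (real j+2)^2 > 0" by simp
        have "(aco F c0 c1 k)\<^sup>2 \<le> F\<^sup>2 * (C * D ^ j / fact j) / ((real j+3)^2 * (real j+2)^2)"
          unfolding eq by (intro divide_right_mono mult_left_mono IH) auto
        also have "\<dots> \<le> C * D ^ k / fact k"
        proof -
          have fk: "fact k = fact j * ((real j+1)*(real j+2)*(real j+3))"
            using kj by (simp add: numeral_3_eq_3 algebra_simps)
          have Dk: "D ^ k = D^j * D^3" using kj by (simp add: power_add)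
          have D3: "F\<^sup>2 \<le> D^3" using D1 DF
            by (smt (verit) le_add_same_cancel2 one_le_power power3_eq_cube mult_le_cancel_left1 mult_sign_intros(1) power2_eq_square)
          have key: "F\<^sup>2 * (real j + 1) \<le> D^3 * ((real j+3) * (real j+2))"
          proof -
            have "F\<^sup>2 * (real j + 1) \<le> D^3 * (real j + 1)" using D3 by (intro mult_right_mono) auto
            also have "\<dots> \<le> D^3 * ((real j+3) * (real j+2))" using D1
              by (intro mult_left_mono) (auto simp: algebra_simps)
            finally show ?thesis .
          qed
          have fj: "fact j > (0::real)" by simp
          have j1: "real j + 1 \<noteq> 0" by linarith
          have "F\<^sup>2 * (C * D ^ j / fact j) / ((real j+3)^2 * (real j+2)^2)
               = (C * D^j / fact j) * (F\<^sup>2 * (real j + 1)) / ((real j + 1) * (real j+3)^2 * (real j+2)^2)"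
            using j1 by (simp add: mult.assoc)
          also have "\<dots> \<le> (C * D^j / fact j) * (D^3 * ((real j+3) * (real j+2))) / ((real j + 1) * (real j+3)^2 * (real j+2)^2)"
            using key C0 D1 by (intro divide_right_mono mult_left_mono) auto
          also have "\<dots> = C * D ^ k / fact k"
          proof -
            have a: "real j + 2 \<noteq> 0" "real j + 3 \<noteq> 0" "fact j \<noteq> (0::real)" using j1 by auto
            show ?thesis unfolding fk Dk using a j1 by (simp add: divide_simps power2_eq_square)
          qed
          finally show ?thesis .
        qed
        finally show ?thesis by (simp add: C_def D_def)
      qed
    qed
  qed
qed

lemma aco_summable: "summable (\<lambda>k. aco F c0 c1 k * z^k)"
proof -
  define D where "D = max 1 (F\<^sup>2)"
  define C where "C = c0\<^sup>2 + c1\<^sup>2 + 1"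
  have C0: "C \<ge> 0" by (simp add: C_def)
  have s1: "summable (\<lambda>k. C * (inverse (fact k) * (2*D*z\<^sup>2)^k))"
    by (intro summable_mult summable_exp)
  have s2: "summable (\<lambda>k. (1/2::real)^k)" by simp
  have s3: "summable (\<lambda>k. (C * (inverse (fact k) * (2*D*z\<^sup>2)^k) + (1/2::real)^k) / 2)"
    by (intro summable_divide summable_add s1 s2)
  show ?thesis
  proof (rule summable_comparison_test'[OF s3])
    fix k :: nat
    assume "k \<ge> 0"
    define a where "a = aco F c0 c1 k"
    have ab: "a\<^sup>2 \<le> C * D ^ k / fact k" unfolding a_def C_def D_def by (rule aco_bound)
    define P where "P = a\<^sup>2 * (2*z\<^sup>2)^k"
    define Q where "Q = (1/2::real)^k"
    define t where "t = \<bar>a\<bar> * \<bar>z\<bar>^k"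
    have tPQ: "t\<^sup>2 = P * Q"
      unfolding t_def P_def Q_def by (simp add: power_mult_distrib power_divide power_even_abs
         flip: power_mult) (simp add: power2_eq_square power_mult_distrib field_simps flip: power_mult_distrib)
    have P0: "P \<ge> 0" "Q \<ge> 0" "t \<ge> 0" by (auto simp: P_def Q_def t_def)
    have "2 * t \<le> P + Q"
    proof -
      have e: "(P+Q)\<^sup>2 - (2*t)\<^sup>2 = (P-Q)\<^sup>2" using tPQ by (simp add: power2_eq_square algebra_simps)
      have "(2*t)\<^sup>2 \<le> (P+Q)\<^sup>2" using e by (smt (verit) zero_le_power2)
      then show ?thesis using P0 by (smt (verit) power2_le_imp_le)
    qed
    moreover have "P \<le> C * (inverse (fact k) * (2*D*z\<^sup>2)^k)"
    proof -
      have "P \<le> (C * D ^ k / fact k) * (2*z\<^sup>2)^k" unfolding P_def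
        by (intro mult_right_mono ab) auto
      also have "\<dots> = C * (inverse (fact k) * (2*D*z\<^sup>2)^k)"
        by (simp add: power_mult_distrib field_simps)
      finally show ?thesis .
    qed
    ultimately show "norm (aco F c0 c1 k * z^k) \<le> (C * (inverse (fact k) * (2*D*z\<^sup>2)^k) + (1/2::real)^k) / 2"
      unfolding Q_def t_def a_def by (simp add: abs_mult power_abs)
  qed
qed

definition S0 :: "real \<Rightarrow> real \<Rightarrow> real \<Rightarrow> real \<Rightarrow> real" where
  "S0 F c0 c1 z = (\<Sum>k. aco F c0 c1 k * z^k)"
definition S1 :: "real \<Rightarrow> real \<Rightarrow> real \<Rightarrow> real \<Rightarrow> real" where
  "S1 F c0 c1 z = (\<Sum>k. diffs (aco F c0 c1) k * z^k)"

lemma S0_deriv: "(S0 F c0 c1 has_real_derivative S1 F c0 c1 z) (at z)"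
  unfolding S0_def[abs_def] S1_def
  by (rule termdiffs_strong_converges_everywhere) (rule aco_summable)

lemma S1_deriv: "(S1 F c0 c1 has_real_derivative (- F * z * S0 F c0 c1 z)) (at z)"
proof -
  have sd: "\<And>y. summable (\<lambda>k. diffs (aco F c0 c1) k * y^k)"
    by (rule termdiff_converges_all) (rule aco_summable)
  have d: "(S1 F c0 c1 has_real_derivative (\<Sum>k. diffs (diffs (aco F c0 c1)) k * z^k)) (at z)"
    unfolding S1_def[abs_def]
    by (rule termdiffs_strong_converges_everywhere) (rule sd)
  have dd: "diffs (diffs (aco F c0 c1)) (Suc j) * z^(Suc j) = -F*z*(aco F c0 c1 j * z^j)" for j
  proof -
    have "diffs (diffs (aco F c0 c1)) (Suc j) = (real (j+3) * real (j+2))*aco F c0 c1 (Suc(Suc(Suc j)))"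
      unfolding diffs_def by (simp del: aco.simps add: algebra_simps)
    also have "\<dots> = -F * aco F c0 c1 j"
    proof -
      have nz: "real (j+3) * real (j+2) \<noteq> 0" by simp
      have "(real (j+3) * real (j+2)) * (- F * aco F c0 c1 j / (real (j+3) * real (j+2))) = -F * aco F c0 c1 j"
        using nz by (simp del: of_nat_add)
      then show ?thesis by (simp only: aco.simps)
    qed
    finally show ?thesis by (simp add: algebra_simps)
  qed
  have "(\<lambda>j. aco F c0 c1 j * z^j) sums S0 F c0 c1 z"
    unfolding S0_def using aco_summable summable_sums by blast
  then have "(\<lambda>j. -F*z*(aco F c0 c1 j * z^j)) sums (-F*z*S0 F c0 c1 z)"
    by (rule sums_mult)
  then have "(\<lambda>j. diffs (diffs (aco F c0 c1)) (Suc j) * z^(Suc j)) sums (-F*z*S0 F c0 c1 z)"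
    unfolding dd .
  then have "(\<lambda>j. diffs (diffs (aco F c0 c1)) j * z^j) sums (-F*z*S0 F c0 c1 z + diffs (diffs (aco F c0 c1)) 0 * z^0)"
    by (subst (asm) sums_Suc_iff)
  moreover have "diffs (diffs (aco F c0 c1)) 0 = 0" by (simp add: diffs_def)
  ultimately have "(\<Sum>k. diffs (diffs (aco F c0 c1)) k * z^k) = -F*z*S0 F c0 c1 z"
    using sums_unique by fastforce
  then show ?thesis using d by simp
qed

lemma S_init: "S0 F c0 c1 0 = c0" "S1 F c0 c1 0 = c1"
proof -
  have "S0 F c0 c1 0 = aco F c0 c1 0" unfolding S0_def
    by (subst suminf_finite[of "{0}"]) auto
  then show "S0 F c0 c1 0 = c0" by simp
  have "S1 F c0 c1 0 = diffs (aco F c0 c1) 0" unfolding S1_def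
    by (subst suminf_finite[of "{0}"]) auto
  then show "S1 F c0 c1 0 = c1" by (simp add: diffs_def)
qed

lemma ramp:
  fixes \<phi> \<phi>' q :: "real \<Rightarrow> real" and a \<mu> :: real
  assumes d0: "\<And>x. (\<phi> has_real_derivative \<phi>' x) (at x)"
    and d1: "\<And>x. (\<phi>' has_real_derivative q x * \<phi> x) (at x)"
    and mu1: "\<mu> \<ge> 1"
    and qb: "\<And>x. a \<le> x \<Longrightarrow> x \<le> a + 1 \<Longrightarrow> q x \<ge> \<mu>\<^sup>2 + \<mu>"
    and p0: "\<phi> a \<ge> 0" and h0: "\<phi>' a - \<phi> a > 0"
  shows "\<And>x. a \<le> x \<Longrightarrow> x \<le> a + 1 \<Longrightarrow> \<phi>' x - (1 + (\<mu> - 1) * (x - a)) * \<phi> x > 0"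
    and "\<And>x. a < x \<Longrightarrow> x \<le> a + 1 \<Longrightarrow> \<phi> x > 0"
    and "\<And>x. a \<le> x \<Longrightarrow> x \<le> a + 1 \<Longrightarrow> \<phi> x \<ge> 0"
    and "\<And>x y. a \<le> x \<Longrightarrow> x \<le> y \<Longrightarrow> y \<le> a + 1 \<Longrightarrow> exp (-x) * \<phi> x \<le> exp (-y) * \<phi> y"
proof -
  define \<kappa> where "\<kappa> = \<mu> - 1"
  have k0: "\<kappa> \<ge> 0" using mu1 by (simp add: \<kappa>_def)
  define lam where "lam x = 1 + \<kappa> * (x - a)" for x
  define Lam where "Lam x = (x - a) + \<kappa> * (x - a)\<^sup>2 / 2" for x
  define h where "h x = \<phi>' x - lam x * \<phi> x" for x
  define H where "H x = exp (Lam x) * h x" for x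
  define G where "G x = exp (- Lam x) * \<phi> x" for x
  have lamb: "1 \<le> lam x \<and> lam x \<le> \<mu>" if "a \<le> x" "x \<le> a + 1" for x
  proof -
    have "\<kappa> * (x - a) \<le> \<kappa> * 1" using that k0 by (intro mult_left_mono) auto
    moreover have "\<kappa> * (x - a) \<ge> 0" using that k0 by simp
    ultimately show ?thesis by (simp add: lam_def \<kappa>_def)
  qed
  have dLam: "(Lam has_real_derivative lam x) (at x)" for x
    unfolding Lam_def lam_def by (auto intro!: derivative_eq_intros simp: power2_eq_square field_simps)
  have dlam: "(lam has_real_derivative \<kappa>) (at x)" for x
    unfolding lam_def by (auto intro!: derivative_eq_intros)
  have dh: "(h has_real_derivative (q x * \<phi> x - \<kappa> * \<phi> x - lam x * \<phi>' x)) (at x)" for x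
    unfolding h_def[abs_def] by (auto intro!: derivative_eq_intros d0 d1 dlam simp: algebra_simps)
  have dH: "(H has_real_derivative exp (Lam x) * ((q x - (lam x)\<^sup>2 - \<kappa>) * \<phi> x)) (at x)" for x
    unfolding H_def[abs_def]
    by (rule derivative_eq_intros dLam dh refl)+ (simp add: h_def algebra_simps power2_eq_square)
  have dG: "(G has_real_derivative exp (- Lam x) * h x) (at x)" for x
    unfolding G_def[abs_def]
    by (rule derivative_eq_intros dLam d0 refl)+ (simp add: h_def algebra_simps)
  have cont_h: "isCont h x" for x using dh DERIV_isCont by blast
  have Lam_a: "Lam a = 0" "lam a = 1" by (simp_all add: Lam_def lam_def)
  have ha: "h a > 0" using h0 by (simp add: h_def Lam_a)
  have qpos: "q x - (lam x)\<^sup>2 - \<kappa> \<ge> 0" if "a \<le> x" "x \<le> a + 1" for x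
  proof -
    have "(lam x)\<^sup>2 \<le> \<mu>\<^sup>2" using lamb[OF that] by (intro power_mono) auto
    then show ?thesis using qb[OF that] by (simp add: \<kappa>_def)
  qed
  have hpos: "h x > 0" if "a \<le> x" "x \<le> a + 1" for x
  proof (rule ccontr)
    assume "\<not> h x > 0"
    define Z where "Z = {a..a+1} \<inter> h -` {..0}"
    have "x \<in> Z" using that \<open>\<not> h x > 0\<close> by (simp add: Z_def)
    have clZ: "closed Z" unfolding Z_def
      by (intro closed_Int closed_atLeastAtMost continuous_closed_vimage) (auto simp: cont_h)
    have bZ: "bdd_below Z" unfolding Z_def by (rule bdd_belowI[of _ a]) auto
    define x0 where "x0 = Inf Z"
    have x0Z: "x0 \<in> Z" unfolding x0_def using clZ bZ \<open>x \<in> Z\<close> closed_contains_Inf by blast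
    have x0r: "a \<le> x0" "x0 \<le> a + 1" "h x0 \<le> 0" using x0Z by (auto simp: Z_def)
    have below: "h y > 0" if "a \<le> y" "y < x0" for y
    proof (rule ccontr)
      assume "\<not> h y > 0"
      then have "y \<in> Z" using that x0r by (simp add: Z_def)
      then have "x0 \<le> y" unfolding x0_def using bZ by (rule cInf_lower)
      then show False using that by simp
    qed
    have ax0: "a < x0" using x0r ha by (cases "a = x0") auto
    have hx0: "h x0 \<ge> 0"
    proof (rule ccontr)
      assume "\<not> h x0 \<ge> 0"
      then have neg: "h x0 < 0" by simp
      have "(h \<longlongrightarrow> h x0) (at_left x0)"
        using cont_h[of x0] continuous_at_split continuous_within by blast
      then have ev: "eventually (\<lambda>y. h y < 0) (at_left x0)" using neg by (rule order_tendstoD(2))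
      have ev2: "eventually (\<lambda>y. y \<in> {a<..<x0}) (at_left x0)" by (rule eventually_at_left_real[OF ax0])
      have "eventually (\<lambda>y. False) (at_left x0)" using ev ev2
      proof eventually_elim
        case (elim y) then show ?case using below[of y] by auto
      qed
      then show False by (simp add: trivial_limit_at_left_real)
    qed
    have hnn: "h y \<ge> 0" if "a \<le> y" "y \<le> x0" for y
      using below[of y] that hx0 by (cases "y = x0") auto
    have phinn: "\<phi> y \<ge> 0" if "a \<le> y" "y \<le> x0" for y
    proof -
      have "G a \<le> G y"
        by (rule DERIV_nonneg_imp_nondecreasing[OF that(1)])
           (use dG hnn that in \<open>auto intro!: exI\<close>)
      moreover have "G a \<ge> 0" using p0 by (simp add: G_def)
      ultimately have "G y \<ge> 0" by simp
      then show ?thesis by (simp add: G_def zero_le_mult_iff)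
    qed
    have "H a \<le> H x0"
    proof (rule DERIV_nonneg_imp_nondecreasing[OF x0r(1)])
      fix y assume y: "a \<le> y" "y \<le> x0"
      show "\<exists>d. (H has_real_derivative d) (at y) \<and> d \<ge> 0"
        using dH[of y] qpos[of y] phinn[OF y] y x0r by (intro exI[of _ "exp (Lam y) * ((q y - (lam y)\<^sup>2 - \<kappa>) * \<phi> y)"]) auto
    qed
    moreover have "H a > 0" using ha by (simp add: H_def)
    moreover have "H x0 \<le> 0" using x0r by (simp add: H_def mult_nonneg_nonpos)
    ultimately show False by simp
  qed
  show "\<phi>' x - (1 + (\<mu> - 1) * (x - a)) * \<phi> x > 0" if "a \<le> x" "x \<le> a + 1" for x
    using hpos[OF that] by (simp add: h_def lam_def \<kappa>_def)
  have Gstrict: "G a < G x" if "a < x" "x \<le> a + 1" for x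
    by (rule DERIV_pos_imp_increasing[OF that(1)]) (use dG hpos that in \<open>auto intro!: exI\<close>)
  show phipos: "\<phi> x > 0" if "a < x" "x \<le> a + 1" for x
  proof -
    have "G a \<ge> 0" using p0 by (simp add: G_def)
    then have "G x > 0" using Gstrict[OF that] by linarith
    then show ?thesis by (simp add: G_def zero_less_mult_iff)
  qed
  show phinn: "\<phi> x \<ge> 0" if "a \<le> x" "x \<le> a + 1" for x
    using phipos[of x] that p0 by (cases "x = a") auto
  show "exp (-x) * \<phi> x \<le> exp (-y) * \<phi> y" if "a \<le> x" "x \<le> y" "y \<le> a + 1" for x y
  proof (rule DERIV_nonneg_imp_nondecreasing[OF that(2)])
    fix z assume z: "x \<le> z" "z \<le> y"
    have za: "a \<le> z" "z \<le> a + 1" using z that by auto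
    have "((\<lambda>z. exp (-z) * \<phi> z) has_real_derivative exp (-z) * (\<phi>' z - \<phi> z)) (at z)"
      by (rule derivative_eq_intros d0 refl)+ (simp add: algebra_simps)
    moreover have "\<phi>' z - \<phi> z \<ge> 0"
    proof -
      have "\<phi>' z - \<phi> z = h z + (lam z - 1) * \<phi> z" by (simp add: h_def algebra_simps)
      moreover have "(lam z - 1) * \<phi> z \<ge> 0" using lamb[OF za] phinn[OF za] by simp
      ultimately show ?thesis using hpos[OF za] by simp
    qed
    ultimately show "\<exists>d. ((\<lambda>z. exp (-z) * \<phi> z) has_real_derivative d) (at z) \<and> d \<ge> 0"
      by (intro exI conjI) auto
  qed
qed



locale sys =
  fixes q y1 y1' y2 y2' :: "real \<Rightarrow> real" and g :: "int \<Rightarrow> real"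
  assumes d1: "\<And>x. (y1 has_real_derivative y1' x) (at x)"
    and d1': "\<And>x. (y1' has_real_derivative q x * y1 x) (at x)"
    and d2: "\<And>x. (y2 has_real_derivative y2' x) (at x)"
    and d2': "\<And>x. (y2' has_real_derivative q x * y2 x) (at x)"
    and W: "\<And>x. y1 x * y2' x - y1' x * y2 x = 1"
begin

definition bstep :: "int \<Rightarrow> real \<times> real \<Rightarrow> real \<times> real" where
  "bstep n c = (fst c + g n * (fst c * y1 n + snd c * y2 n) * y2 n,
               snd c - g n * (fst c * y1 n + snd c * y2 n) * y1 n)"

primrec cs :: "real \<times> real \<Rightarrow> nat \<Rightarrow> real \<times> real" where
  "cs p 0 = p"
| "cs p (Suc k) = bstep (-1 - int k) (cs p k)"

definition pc :: "real \<times> real \<Rightarrow> int \<Rightarrow> real \<times> real" where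
  "pc p m = cs p (nat (-1 - m))"

definition phi :: "real \<times> real \<Rightarrow> int \<Rightarrow> real \<Rightarrow> real" where
  "phi p m x = fst (pc p m) * y1 x + snd (pc p m) * y2 x"

definition dphi :: "real \<times> real \<Rightarrow> int \<Rightarrow> real \<Rightarrow> real" where
  "dphi p m x = fst (pc p m) * y1' x + snd (pc p m) * y2' x"

definition psi :: "real \<times> real \<Rightarrow> real \<Rightarrow> real" where
  "psi p x = phi p \<lfloor>x\<rfloor> x"

lemma pc_step: "n \<le> -1 \<Longrightarrow> pc p (n - 1) = bstep n (pc p n)"
proof -
  assume n: "n \<le> -1"
  have "nat (-1 - (n - 1)) = Suc (nat (-1 - n))" using n by simp
  moreover have "-1 - int (nat (-1 - n)) = n" using n by simp
  ultimately show ?thesis unfolding pc_def by simp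
qed

lemma pc_top: "pc p (-1) = p" by (simp add: pc_def)

lemma phi_deriv: "(phi p m has_real_derivative dphi p m x) (at x)"
  unfolding phi_def[abs_def] dphi_def by (auto intro!: derivative_eq_intros d1 d2)

lemma dphi_deriv: "(dphi p m has_real_derivative q x * phi p m x) (at x)"
  unfolding phi_def dphi_def[abs_def] by (auto intro!: derivative_eq_intros d1' d2' simp: algebra_simps)

lemma match:
  assumes "n \<le> -1"
  shows "phi p (n - 1) n = phi p n n"
    and "dphi p (n - 1) n = dphi p n n - g n * phi p n n"
proof -
  obtain A B where AB: "pc p n = (A, B)" by (cases "pc p n")
  have W': "y1 n * y2' n - y1' n * y2 n = 1" by (rule W)
  show "phi p (n - 1) n = phi p n n"
    unfolding phi_def pc_step[OF assms] AB bstep_def by (simp add: algebra_simps)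
  show "dphi p (n - 1) n = dphi p n n - g n * phi p n n"
    unfolding phi_def dphi_def pc_step[OF assms] AB bstep_def using W'
    by (simp add: algebra_simps) (metis (no_types, opaque_lifting) W' mult.assoc mult.left_commute
        distrib_left diff_diff_eq2 right_diff_distrib mult.commute mult_1_right)
qed

lemma bstep_add: "bstep n (c + d) = bstep n c + bstep n d"
  by (simp add: bstep_def algebra_simps)
lemma bstep_scale: "bstep n (a *\<^sub>R c) = a *\<^sub>R bstep n c"
  by (simp add: bstep_def algebra_simps)
lemma cs_add: "cs (p + r) k = cs p k + cs r k"
  by (induction k) (simp_all add: bstep_add)
lemma cs_scale: "cs (a *\<^sub>R p) k = a *\<^sub>R cs p k"
  by (induction k) (simp_all add: bstep_scale)
lemma bstep_zero: "bstep n c = 0 \<Longrightarrow> c = 0"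
proof -
  assume h: "bstep n c = 0"
  obtain A B where c: "c = (A, B)" by (cases c)
  define v where "v = A * y1 n + B * y2 n"
  have e1: "A + g n * v * y2 n = 0" and e2: "B - g n * v * y1 n = 0"
    using h by (simp_all add: bstep_def c v_def zero_prod_def)
  have "v = (A + g n * v * y2 n) * y1 n + (B - g n * v * y1 n) * y2 n" by (simp add: v_def algebra_simps)
  then have "v = 0" using e1 e2 by simp
  then show "c = 0" using e1 e2 by (simp add: c zero_prod_def)
qed
lemma cs_zero: "cs p k = 0 \<Longrightarrow> p = 0"
  by (induction k) (auto dest: bstep_zero)
lemma pc_add: "pc (p + r) m = pc p m + pc r m" by (simp add: pc_def cs_add)
lemma pc_scale: "pc (a *\<^sub>R p) m = a *\<^sub>R pc p m" by (simp add: pc_def cs_scale)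
lemma pc_zero: "pc p m = 0 \<Longrightarrow> p = 0" by (simp add: pc_def cs_zero)

lemma phi_add: "phi (p + r) m x = phi p m x + phi r m x"
  by (simp add: phi_def pc_add algebra_simps)
lemma phi_scale: "phi (a *\<^sub>R p) m x = a * phi p m x"
  by (simp add: phi_def pc_scale algebra_simps)
lemma dphi_scale: "dphi (a *\<^sub>R p) m x = a * dphi p m x"
  by (simp add: dphi_def pc_scale algebra_simps)
lemma psi_add: "psi (p + r) x = psi p x + psi r x" by (simp add: psi_def phi_add)
lemma psi_scale: "psi (a *\<^sub>R p) x = a * psi p x" by (simp add: psi_def phi_scale)

lemma psi_eq: "of_int m \<le> x \<Longrightarrow> x < of_int m + 1 \<Longrightarrow> psi p x = phi p m x"
  unfolding psi_def by (metis floor_unique)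

lemma psi_int: "psi p (of_int n) = phi p n (of_int n)" by (simp add: psi_def)

lemma psi_eq_closed: "m \<le> -2 \<Longrightarrow> of_int m \<le> x \<Longrightarrow> x \<le> of_int m + 1 \<Longrightarrow> psi p x = phi p m x"
proof -
  assume m: "m \<le> -2" and x: "of_int m \<le> x" "x \<le> of_int m + 1"
  show ?thesis
  proof (cases "x = of_int m + 1")
    case True
    have "psi p x = phi p (m+1) (of_int (m+1))" using True by (simp add: psi_eq)
    also have "\<dots> = phi p m (of_int (m+1))" using match(1)[of "m+1" p] m by simp
    finally show ?thesis using True by simp
  next
    case False then show ?thesis using x by (simp add: psi_eq)
  qed
qed

lemma psi_local:
  fixes x :: real
  assumes "x \<notin> \<int>"
  shows "\<forall>z\<in>{of_int \<lfloor>x\<rfloor><..<of_int \<lfloor>x\<rfloor> + 1}. psi p z = phi p \<lfloor>x\<rfloor> z"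
    and "x \<in> {of_int \<lfloor>x\<rfloor><..<of_int \<lfloor>x\<rfloor> + 1}"
proof -
  show "\<forall>z\<in>{of_int \<lfloor>x\<rfloor><..<of_int \<lfloor>x\<rfloor> + 1}. psi p z = phi p \<lfloor>x\<rfloor> z"
    by (auto intro: psi_eq)
  have ne: "of_int \<lfloor>x\<rfloor> \<noteq> x" using assms by (metis Ints_of_int)
  have "of_int \<lfloor>x\<rfloor> < x" by (rule order_le_neq_trans[OF of_int_floor_le ne])
  then show "x \<in> {of_int \<lfloor>x\<rfloor><..<of_int \<lfloor>x\<rfloor> + 1}"
    using real_of_int_floor_add_one_gt[of x] by auto
qed

lemma deriv_psi_local:
  assumes "of_int m < z" "z < of_int m + 1"
  shows "deriv (psi p) z = dphi p m z"
proof -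
  have "(psi p has_real_derivative dphi p m z) (at z)"
    by (rule has_field_derivative_transform_within_open[OF phi_deriv, where S="{of_int m<..<of_int m+1}"])
       (use assms in \<open>auto intro: psi_eq[symmetric]\<close>)
  then show ?thesis by (rule DERIV_imp_deriv)
qed

lemma psi_ode:
  assumes "x \<notin> \<int>"
  shows "psi p differentiable (at x)"
    and "(deriv (psi p) has_real_derivative q x * psi p x) (at x)"
proof -
  let ?m = "\<lfloor>x\<rfloor>"
  let ?S = "{of_int ?m<..<of_int ?m + 1}"
  note loc = psi_local(1)[OF assms, of p] psi_local(2)[OF assms]
  have "(psi p has_real_derivative dphi p ?m x) (at x)"
    by (rule has_field_derivative_transform_within_open[OF phi_deriv, where S="?S"]) (use loc in auto)
  then show "psi p differentiable (at x)" using real_differentiable_def by blast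
  have "(deriv (psi p) has_real_derivative q x * phi p ?m x) (at x)"
    by (rule has_field_derivative_transform_within_open[OF dphi_deriv, where S="?S"])
       (use loc in \<open>auto intro: deriv_psi_local[symmetric]\<close>)
  then show "(deriv (psi p) has_real_derivative q x * psi p x) (at x)"
    using loc by simp
qed

lemma isCont_phi: "isCont (phi p m) x" using phi_deriv DERIV_isCont by blast
lemma isCont_dphi: "isCont (dphi p m) x" using dphi_deriv DERIV_isCont by blast

lemma psi_cont_int:
  assumes n: "n \<le> -1"
  shows "isCont (psi p) (of_int n)"
proof -
  have L: "((psi p) \<longlongrightarrow> psi p (of_int n)) (at_left (of_int n))"
  proof -
    have "(phi p (n-1) \<longlongrightarrow> phi p (n-1) (of_int n)) (at_left (of_int n))"
      using isCont_phi[where p=p and m="n-1" and x="of_int n"] continuous_at_split continuous_within by blast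
    moreover have "phi p (n-1) (of_int n) = psi p (of_int n)"
      using match(1)[OF n] by (simp add: psi_int)
    moreover have "eventually (\<lambda>z. phi p (n-1) z = psi p z) (at_left (of_int n))"
    proof -
      have "eventually (\<lambda>z. z \<in> {of_int n - 1<..<of_int n}) (at_left (of_int n::real))"
        by (rule eventually_at_left_real) simp
      then show ?thesis
        by eventually_elim (auto intro!: psi_eq[symmetric])
    qed
    ultimately show ?thesis using tendsto_cong by fastforce
  qed
  have R: "((psi p) \<longlongrightarrow> psi p (of_int n)) (at_right (of_int n))"
  proof -
    have "(phi p n \<longlongrightarrow> phi p n (of_int n)) (at_right (of_int n))"
      using isCont_phi[where p=p and m=n and x="of_int n"] continuous_at_split continuous_within by blast
    moreover have "phi p n (of_int n) = psi p (of_int n)" by (simp add: psi_int)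
    moreover have "eventually (\<lambda>z. phi p n z = psi p z) (at_right (of_int n))"
      using eventually_at_right_real[of "of_int n" "of_int n + 1", OF less_add_one]
      by eventually_elim (auto intro!: psi_eq[symmetric])
    ultimately show ?thesis using tendsto_cong by fastforce
  qed
  show ?thesis using L R continuous_at_split continuous_within by blast
qed

lemma psi_jump:
  assumes n: "n \<le> -1"
  shows "((\<lambda>e. deriv (psi p) (of_int n + e) - deriv (psi p) (of_int n - e))
            \<longlongrightarrow> g n * psi p (of_int n)) (at_right 0)"
proof -
  have ev: "eventually (\<lambda>e. deriv (psi p) (of_int n + e) - deriv (psi p) (of_int n - e)
            = dphi p n (of_int n + e) - dphi p (n-1) (of_int n - e)) (at_right 0)"
    using eventually_at_right_real[OF zero_less_one]
  proof eventually_elim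
    case (elim e)
    then have "deriv (psi p) (of_int n + e) = dphi p n (of_int n + e)"
      by (intro deriv_psi_local) auto
    moreover have "deriv (psi p) (of_int n - e) = dphi p (n-1) (of_int n - e)"
      using elim by (intro deriv_psi_local) auto
    ultimately show ?case by simp
  qed
  have t1: "((\<lambda>e. of_int n + e) \<longlongrightarrow> (of_int n::real)) (at_right 0)"
    by (auto intro!: tendsto_eq_intros)
  have t2: "((\<lambda>e. of_int n - e) \<longlongrightarrow> (of_int n::real)) (at_right 0)"
    by (auto intro!: tendsto_eq_intros)
  have "((\<lambda>e. dphi p n (of_int n + e) - dphi p (n-1) (of_int n - e))
          \<longlongrightarrow> dphi p n (of_int n) - dphi p (n-1) (of_int n)) (at_right 0)"
    by (intro tendsto_diff isCont_tendsto_compose[OF isCont_dphi] t1 t2)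
  moreover have "dphi p n (of_int n) - dphi p (n-1) (of_int n) = g n * psi p (of_int n)"
    using match(2)[OF n] by (simp add: psi_int)
  ultimately show ?thesis using ev tendsto_cong by fastforce
qed

lemma pc_zero_at: "phi p m x = 0 \<Longrightarrow> dphi p m x = 0 \<Longrightarrow> p = 0"
proof -
  assume a: "phi p m x = 0" "dphi p m x = 0"
  obtain A B where AB: "pc p m = (A, B)" by (cases "pc p m")
  have e1: "A * y1 x + B * y2 x = 0" and e2: "A * y1' x + B * y2' x = 0"
    using a by (simp_all add: phi_def dphi_def AB)
  have "A = A * (y1 x * y2' x - y1' x * y2 x)" using W[of x] by simp
  also have "\<dots> = y2' x * (A * y1 x + B * y2 x) - y2 x * (A * y1' x + B * y2' x)" by (simp add: algebra_simps)
  finally have A0: "A = 0" using e1 e2 by simp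
  have "B = B * (y1 x * y2' x - y1' x * y2 x)" using W[of x] by simp
  also have "\<dots> = y1 x * (A * y1' x + B * y2' x) - y1' x * (A * y1 x + B * y2 x)" by (simp add: algebra_simps)
  finally have B0: "B = 0" using e1 e2 by simp
  show "p = 0" using AB A0 B0 pc_zero by (simp add: zero_prod_def)
qed

lemma linear_psi: "linear (\<lambda>p. psi p x)"
  by (rule linearI) (simp_all add: psi_add psi_scale)

lemma continuous_psi: "continuous_on S (\<lambda>p. psi p x)"
  using linear_psi linear_conv_bounded_linear linear_continuous_on by blast

end

locale sys2 = sys +
  fixes K :: int and mu :: "int \<Rightarrow> real"
  assumes K1: "K \<ge> 1"
    and R1: "\<And>n x. n \<le> -K \<Longrightarrow> of_int n - 1 \<le> x \<Longrightarrow> x \<le> of_int n \<Longrightarrow> q x \<ge> (mu n)\<^sup>2 + mu n"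
    and R2: "\<And>n. n \<le> -K \<Longrightarrow> mu n \<ge> 1"
    and R3: "\<And>n. n \<le> -K \<Longrightarrow> mu n + g n \<ge> 1"
begin

lemma ramp_piece:
  assumes m: "m \<le> -K - 1" and h: "phi p m (of_int m) \<ge> 0" "dphi p m (of_int m) - phi p m (of_int m) > 0"
  shows "\<And>x. of_int m < x \<Longrightarrow> x \<le> of_int m + 1 \<Longrightarrow> phi p m x > 0"
    and "\<And>x. of_int m \<le> x \<Longrightarrow> x \<le> of_int m + 1 \<Longrightarrow> phi p m x \<ge> 0"
    and "\<And>x y. of_int m \<le> x \<Longrightarrow> x \<le> y \<Longrightarrow> y \<le> of_int m + 1 \<Longrightarrow>
            exp (-x) * phi p m x \<le> exp (-y) * phi p m y"
    and "dphi p m (of_int m + 1) - mu (m+1) * phi p m (of_int m + 1) > 0"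
proof -
  have qb: "\<And>x. of_int m \<le> x \<Longrightarrow> x \<le> of_int m + 1 \<Longrightarrow> q x \<ge> (mu (m+1))\<^sup>2 + mu (m+1)"
    using R1[of "m+1"] m by simp
  note R = ramp[of "phi p m" "dphi p m" q "mu (m+1)" "of_int m", OF phi_deriv dphi_deriv R2[of "m+1"] qb h]
  show "\<And>x. of_int m < x \<Longrightarrow> x \<le> of_int m + 1 \<Longrightarrow> phi p m x > 0" using R(2) m by simp
  show "\<And>x. of_int m \<le> x \<Longrightarrow> x \<le> of_int m + 1 \<Longrightarrow> phi p m x \<ge> 0" using R(3) m by simp
  show "\<And>x y. of_int m \<le> x \<Longrightarrow> x \<le> y \<Longrightarrow> y \<le> of_int m + 1 \<Longrightarrow>
            exp (-x) * phi p m x \<le> exp (-y) * phi p m y" using R(4) m by simp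
  show "dphi p m (of_int m + 1) - mu (m+1) * phi p m (of_int m + 1) > 0"
    using R(1)[of "of_int m + 1"] m by simp
qed

lemma chain:
  assumes N: "N \<ge> K + 1" and z: "phi p (-N) (of_int (-N)) = 0" and d: "dphi p (-N) (of_int (-N)) > 0"
  shows "\<And>m. -N \<le> m \<Longrightarrow> m \<le> -K - 1 \<Longrightarrow> phi p m (of_int m) \<ge> 0 \<and> dphi p m (of_int m) - phi p m (of_int m) > 0"
proof -
  fix m assume m: "-N \<le> m" "m \<le> -K - 1"
  have "m \<le> -K - 1 \<longrightarrow> phi p m (of_int m) \<ge> 0 \<and> dphi p m (of_int m) - phi p m (of_int m) > 0"
    using m(1)
  proof (induction m rule: int_ge_induct)
    case base then show ?case using z d by simp
  next
    case (step i)
    show ?case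
    proof
      assume i1: "i + 1 \<le> -K - 1"
      then have i: "i \<le> -K - 1" by simp
      then have Hi: "phi p i (of_int i) \<ge> 0" "dphi p i (of_int i) - phi p i (of_int i) > 0" using step by auto
      note RP = ramp_piece[OF i Hi]
      have pos: "phi p i (of_int i + 1) > 0" using RP(1)[of "of_int i + 1"] by simp
      have d1: "dphi p i (of_int i + 1) - mu (i+1) * phi p i (of_int i + 1) > 0" by (rule RP(4))
      have i1': "i + 1 \<le> -1" using i1 K1 by simp
      have m1: "phi p (i+1) (of_int (i+1)) = phi p i (of_int i + 1)"
        using match(1)[OF i1', of p] by simp
      have m2: "dphi p (i+1) (of_int (i+1)) = dphi p i (of_int i + 1) + g (i+1) * phi p i (of_int i + 1)"
        using match(2)[OF i1', of p] m1 by simp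
      have r3: "mu (i+1) + g (i+1) \<ge> 1" using R3[of "i+1"] i1 by simp
      have "dphi p (i+1) (of_int (i+1)) - phi p (i+1) (of_int (i+1))
            = (dphi p i (of_int i + 1) - mu (i+1) * phi p i (of_int i + 1))
              + (mu (i+1) + g (i+1) - 1) * phi p i (of_int i + 1)"
        unfolding m1 m2 by (simp add: algebra_simps)
      moreover have "(mu (i+1) + g (i+1) - 1) * phi p i (of_int i + 1) \<ge> 0"
        using r3 pos by simp
      ultimately show "phi p (i + 1) (of_int (i + 1)) \<ge> 0 \<and>
          dphi p (i + 1) (of_int (i + 1)) - phi p (i + 1) (of_int (i + 1)) > 0"
        using d1 pos m1 by simp
    qed
  qed
  then show "phi p m (of_int m) \<ge> 0 \<and> dphi p m (of_int m) - phi p m (of_int m) > 0" using m by simp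
qed

lemma decay:
  assumes N: "N \<ge> K + 1" and z: "phi p (-N) (of_int (-N)) = 0" and d: "dphi p (-N) (of_int (-N)) > 0"
  shows "\<And>x y. of_int (-N) \<le> x \<Longrightarrow> x \<le> y \<Longrightarrow> y \<le> of_int (-K) \<Longrightarrow>
          0 \<le> psi p x \<and> exp (-x) * psi p x \<le> exp (-y) * psi p y"
proof -
  define Ev where "Ev x = exp (-x) * psi p x" for x
  have piece: "psi p x \<ge> 0 \<and> (\<forall>y. x \<le> y \<longrightarrow> y \<le> of_int m + 1 \<longrightarrow> Ev x \<le> Ev y)"
    if m: "-N \<le> m" "m \<le> -K - 1" and x: "of_int m \<le> x" "x \<le> of_int m + 1" for m x
  proof -
    note CH = chain[OF N z d m]
    note RP = ramp_piece[OF m(2) conjunct1[OF CH] conjunct2[OF CH]]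
    have m2: "m \<le> -2" using m K1 by simp
    have "psi p x = phi p m x" by (rule psi_eq_closed[OF m2 x])
    moreover have "\<forall>y. x \<le> y \<longrightarrow> y \<le> of_int m + 1 \<longrightarrow> Ev x \<le> Ev y"
    proof (intro allI impI)
      fix y assume y: "x \<le> y" "y \<le> of_int m + 1"
      have "psi p y = phi p m y" using psi_eq_closed[OF m2] x y by simp
      moreover have "psi p x = phi p m x" using psi_eq_closed[OF m2] x by simp
      ultimately show "Ev x \<le> Ev y" using RP(3)[OF x(1) y] unfolding Ev_def by simp
    qed
    ultimately show ?thesis using RP(2)[OF x] by simp
  qed
  have ints: "Ev (of_int i) \<le> Ev (of_int j)" if "-N \<le> i" "i \<le> j" "j \<le> -K" for i j
    using that(2,3)
  proof (induction j rule: int_ge_induct)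
    case base then show ?case by simp
  next
    case (step j)
    have "Ev (of_int i) \<le> Ev (of_int j)" using step by simp
    also have "\<dots> \<le> Ev (of_int (j+1))"
      using piece[of j "of_int j"] step that by simp
    finally show ?case .
  qed
  fix x y :: real assume xy: "of_int (-N) \<le> x" "x \<le> y" "y \<le> of_int (-K)"
  show "0 \<le> psi p x \<and> exp (-x) * psi p x \<le> exp (-y) * psi p y"
  proof (cases "x = of_int (-K)")
    case True
    then have "y = x" using xy by simp
    moreover have "psi p x \<ge> 0" using piece[of "-K-1" x] True N by simp
    ultimately show ?thesis by simp
  next
    case False
    then have xK: "x < of_int (-K)" using xy by simp
    define m where "m = \<lfloor>x\<rfloor>"
    have mx: "of_int m \<le> x" "x < of_int m + 1" unfolding m_def by linarith+
    have mr: "-N \<le> m" "m \<le> -K - 1" using xy xK unfolding m_def by linarith+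
    have P: "psi p x \<ge> 0 \<and> (\<forall>y. x \<le> y \<longrightarrow> y \<le> of_int m + 1 \<longrightarrow> Ev x \<le> Ev y)"
      using piece[OF mr] mx by simp
    have "Ev x \<le> Ev y"
    proof (cases "y \<le> of_int m + 1")
      case True then show ?thesis using P xy by blast
    next
      case False
      define m2 where "m2 = \<lceil>y\<rceil> - 1"
      have y2: "of_int m2 \<le> y" "y \<le> of_int m2 + 1" unfolding m2_def by linarith+
      have m2r: "m + 1 \<le> m2" "m2 \<le> -K - 1" using False xy unfolding m2_def by linarith+
      have "Ev x \<le> Ev (of_int (m+1))" using P mx by simp
      also have "\<dots> \<le> Ev (of_int m2)" using ints[of "m+1" m2] mr m2r by simp
      also have "\<dots> \<le> Ev y" using piece[of m2 "of_int m2"] m2r mr y2 by simp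
      finally show ?thesis .
    qed
    then show ?thesis using P by (simp add: Ev_def)
  qed
qed

lemma dirichlet:
  assumes N: "N \<ge> K + 1"
  shows "\<exists>p. norm p = 1 \<and> phi p (-N) (of_int (-N)) = 0 \<and> dphi p (-N) (of_int (-N)) > 0"
proof -
  let ?x = "of_int (-N) :: real"
  have dec: "phi (a, b) m x = a * phi (1, 0) m x + b * phi (0, 1) m x" for a b m x
  proof -
    have "(a, b) = a *\<^sub>R (1::real, 0::real) + b *\<^sub>R (0, 1)" by simp
    then show ?thesis by (metis phi_add phi_scale)
  qed
  define \<alpha> where "\<alpha> = phi (1, 0) (-N) ?x"
  define \<beta> where "\<beta> = phi (0, 1) (-N) ?x"
  define p0 :: "real \<times> real" where "p0 = (if \<alpha> = 0 \<and> \<beta> = 0 then (1, 0) else (\<beta>, -\<alpha>))"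
  have p0nz: "p0 \<noteq> 0" by (auto simp: p0_def zero_prod_def)
  have z0: "phi p0 (-N) ?x = 0"
  proof (cases "\<alpha> = 0 \<and> \<beta> = 0")
    case True then show ?thesis by (simp add: p0_def \<alpha>_def)
  next
    case False
    have "phi (\<beta>, -\<alpha>) (-N) ?x = \<beta> * \<alpha> + (-\<alpha>) * \<beta>"
      using dec[of \<beta> "-\<alpha>" "-N" ?x] unfolding \<alpha>_def[symmetric] \<beta>_def[symmetric] .
    then show ?thesis using False unfolding p0_def by (simp only: if_False) simp
  qed
  have d0: "dphi p0 (-N) ?x \<noteq> 0" using pc_zero_at[OF z0] p0nz by blast
  define s where "s = (if dphi p0 (-N) ?x > 0 then 1 else -1 :: real)"
  define p1 where "p1 = s *\<^sub>R p0"
  have s0: "s \<noteq> 0" by (simp add: s_def)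
  have p1nz: "p1 \<noteq> 0" using p0nz s0 by (simp add: p1_def)
  have z1: "phi p1 (-N) ?x = 0" unfolding p1_def phi_scale z0 by simp
  have d1: "dphi p1 (-N) ?x > 0" using d0 by (simp add: p1_def dphi_scale s_def)
  define p where "p = (1 / norm p1) *\<^sub>R p1"
  have np: "norm p1 > 0" using p1nz by simp
  have "norm p = 1" using np by (simp add: p_def)
  moreover have "phi p (-N) ?x = 0" unfolding p_def phi_scale z1 by simp
  moreover have "dphi p (-N) ?x > 0" using d1 np by (simp add: p_def dphi_scale)
  ultimately show ?thesis by blast
qed

definition CC :: "nat \<Rightarrow> (real \<times> real) set" where
  "CC i = sphere 0 1 \<inter> (\<Inter>(x, y)\<in>{(x, y). - of_int K - 1 - real i \<le> x \<and> x \<le> y \<and> y \<le> - of_int K}.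
      {p. 0 \<le> psi p x} \<inter> {p. exp (-x) * psi p x \<le> exp (-y) * psi p y})"

lemma CC_closed: "closed (CC i)"
  unfolding CC_def
  by (intro closed_Int closed_sphere closed_INT)
     (auto intro!: closed_Int closed_Collect_le continuous_intros continuous_psi)

lemma CC_mono: "i \<le> j \<Longrightarrow> CC j \<subseteq> CC i"
  unfolding CC_def by auto

lemma CC_nonempty: "CC i \<noteq> {}"
proof -
  define N where "N = K + 1 + int i"
  have N: "N \<ge> K + 1" by (simp add: N_def)
  obtain p where p: "norm p = 1" "phi p (-N) (of_int (-N)) = 0" "dphi p (-N) (of_int (-N)) > 0"
    using dirichlet[OF N] by blast
  have "p \<in> CC i"
    unfolding CC_def using p decay[OF N p(2,3)] by (auto simp: N_def)
  then show ?thesis by blast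
qed

lemma exists_decaying:
  "\<exists>p. p \<noteq> 0 \<and> (\<forall>x y. x \<le> y \<longrightarrow> y \<le> of_int (-K) \<longrightarrow>
        0 \<le> psi p x \<and> exp (-x) * psi p x \<le> exp (-y) * psi p y)"
proof -
  have "sphere (0::real \<times> real) 1 \<inter> \<Inter>(range CC) \<noteq> {}"
  proof (rule compact_imp_fip)
    show "compact (sphere (0::real \<times> real) 1)" by simp
    show "\<And>T. T \<in> range CC \<Longrightarrow> closed T" using CC_closed by auto
    fix F' assume F': "finite F'" "F' \<subseteq> range CC"
    then obtain I where I: "finite I" "F' = CC ` I" by (meson finite_subset_image)
    define j where "j = Max (insert 0 I)"
    have "CC j \<subseteq> sphere 0 1 \<inter> \<Inter>F'"
    proof -
      have "CC j \<subseteq> CC i" if "i \<in> I" for i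
        using CC_mono[of i j] that I(1) by (simp add: j_def)
      moreover have "CC j \<subseteq> sphere 0 1" by (simp add: CC_def)
      ultimately show ?thesis using I(2) by blast
    qed
    then show "sphere 0 1 \<inter> \<Inter>F' \<noteq> {}" using CC_nonempty[of j] by blast
  qed
  then obtain p where p: "p \<in> sphere 0 1" "\<And>i. p \<in> CC i" by blast
  have "p \<noteq> 0" using p(1) by auto
  moreover have "0 \<le> psi p x \<and> exp (-x) * psi p x \<le> exp (-y) * psi p y"
    if "x \<le> y" "y \<le> of_int (-K)" for x y
  proof -
    define i where "i = nat \<lceil>- x\<rceil>"
    have "- of_int K - 1 - real i \<le> x" unfolding i_def using K1 by linarith
    then show ?thesis using p(2)[of i] that unfolding CC_def by auto
  qed
  ultimately show ?thesis by blast
qed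

end

lemma exp2_integrable: "(\<lambda>x::real. exp (2*x)) integrable_on {..<0}"
proof -
  have "(\<lambda>x::real. exp (-2*x)) integrable_on {0..}" by (rule integrable_on_exp_minus_to_infinity) simp
  then have a: "(\<lambda>x::real. exp (-2*x)) absolutely_integrable_on {0..}"
    by (rule nonnegative_absolutely_integrable_1) simp
  have "(\<lambda>x::real. exp (-2*(-x))) absolutely_integrable_on {..0}"
    using has_absolute_integral_reflect_real[of "{..0}" "{0..}" "\<lambda>x. exp (-2*x)" "integral {0..} (\<lambda>x. exp (-2*x))"] a
    by (auto simp: image_iff intro!: exI[of _ "- _"])
  then have "(\<lambda>x::real. exp (2*x)) absolutely_integrable_on {..0}" by simp
  then have "(\<lambda>x::real. exp (2*x)) absolutely_integrable_on {..<0}"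
    by (rule set_integrable_subset) auto
  then show ?thesis by (rule set_lebesgue_integral_eq_integral(1))
qed

lemma params:
  fixes F E :: real and g :: "int \<Rightarrow> real"
  assumes F_pos: "F > 0"
    and liminf: "Liminf at_bot (\<lambda>n::int. ereal (g n / sqrt \<bar>real_of_int n\<bar>)) > ereal (- sqrt F)"
  shows "\<exists>K mu. K \<ge> (1::int) \<and>
     (\<forall>n x. n \<le> -K \<longrightarrow> of_int n - 1 \<le> x \<longrightarrow> x \<le> of_int n \<longrightarrow> - (F * x + E) \<ge> (mu n)\<^sup>2 + mu n) \<and>
     (\<forall>n. n \<le> -K \<longrightarrow> mu n \<ge> (1::real)) \<and>
     (\<forall>n. n \<le> -K \<longrightarrow> mu n + g n \<ge> 1)"
proof -
  obtain r where r: "ereal (- sqrt F) < ereal r" "ereal r < Liminf at_bot (\<lambda>n::int. ereal (g n / sqrt \<bar>real_of_int n\<bar>))"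
    using ereal_dense2[OF liminf] by blast
  have sF: "sqrt F > 0" using F_pos by simp
  define c where "c = max (-r) (sqrt F / 2)"
  have c: "c > 0" "c < sqrt F" "-c \<le> r" using r(1) sF unfolding c_def by (auto simp: max_def)
  have "eventually (\<lambda>n::int. ereal r < ereal (g n / sqrt \<bar>real_of_int n\<bar>)) at_bot"
    using r(2) by (rule less_LiminfD)
  then obtain N0 :: int where N0: "\<And>n. n \<le> N0 \<Longrightarrow> r < g n / sqrt \<bar>real_of_int n\<bar>"
    by (auto simp: eventually_at_bot_linorder)
  define c' where "c' = (c + sqrt F) / 2"
  have c': "c' > c" "c' < sqrt F" "c' > 0" using c by (auto simp: c'_def)
  define D where "D = F - c'^2"
  have D: "D > 0"
  proof -
    have "c'^2 < (sqrt F)^2" using c' by (intro power_strict_mono) auto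
    then show ?thesis using F_pos by (simp add: D_def)
  qed
  define T where "T = max (1 / c') (max (1 / (c' - c)) (2 * c' / D))"
  have T: "T \<ge> 1 / c'" "T \<ge> 1 / (c' - c)" "T \<ge> 2 * c' / D" "T > 0"
    using c' D by (auto simp: T_def max_def)
  define K :: int where "K = max 1 (max (-N0) (max \<lceil>T^2\<rceil> \<lceil>2 * \<bar>E\<bar> / D\<rceil>))"
  define mu where "mu n = c' * sqrt \<bar>real_of_int n\<bar>" for n :: int
  have jb: "sqrt \<bar>real_of_int n\<bar> \<ge> T" "\<bar>real_of_int n\<bar> \<ge> 2 * \<bar>E\<bar> / D" "n \<le> N0" "\<bar>real_of_int n\<bar> \<ge> 1"
    if "n \<le> -K" for n
  proof -
    have "real_of_int (-n) \<ge> T^2" using that unfolding K_def by linarith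
    then have "\<bar>real_of_int n\<bar> \<ge> T^2" by simp
    then have "sqrt \<bar>real_of_int n\<bar> \<ge> sqrt (T^2)" by (rule real_sqrt_le_mono)
    then show "sqrt \<bar>real_of_int n\<bar> \<ge> T" using T by simp
    show "\<bar>real_of_int n\<bar> \<ge> 2 * \<bar>E\<bar> / D" using that unfolding K_def by linarith
    show "n \<le> N0" using that unfolding K_def by linarith
    show "\<bar>real_of_int n\<bar> \<ge> 1" using that unfolding K_def by linarith
  qed
  have "K \<ge> 1" by (simp add: K_def)
  moreover have "mu n \<ge> 1" if "n \<le> -K" for n
  proof -
    have "sqrt \<bar>real_of_int n\<bar> \<ge> 1 / c'" using jb(1)[OF that] T by linarith
    then have "c' * sqrt \<bar>real_of_int n\<bar> \<ge> c' * (1 / c')" using c' by (intro mult_left_mono) auto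
    then show ?thesis using c' by (simp add: mu_def)
  qed
  moreover have "mu n + g n \<ge> 1" if "n \<le> -K" for n
  proof -
    define s where "s = sqrt \<bar>real_of_int n\<bar>"
    have s: "s > 0" using jb(4)[OF that] by (simp add: s_def)
    have "r < g n / s" using N0[OF jb(3)[OF that]] by (simp add: s_def)
    then have "r * s < g n" using s by (simp add: field_simps)
    moreover have "-c * s \<le> r * s" using c s by (intro mult_right_mono) auto
    ultimately have gn: "g n > - c * s" by simp
    have "s \<ge> 1 / (c' - c)" using jb(1)[OF that] T unfolding s_def by linarith
    then have "(c' - c) * s \<ge> (c' - c) * (1 / (c' - c))" using c' by (intro mult_left_mono) auto
    then have "(c' - c) * s \<ge> 1" using c' by simp
    then show ?thesis using gn by (simp add: mu_def s_def[symmetric] algebra_simps)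
  qed
  moreover have "- (F * x + E) \<ge> (mu n)\<^sup>2 + mu n" if "n \<le> -K" "of_int n - 1 \<le> x" "x \<le> of_int n" for n x
  proof -
    define j where "j = \<bar>real_of_int n\<bar>"
    define s where "s = sqrt j"
    have j: "j = - of_int n" "j \<ge> 1" using jb(4)[OF that(1)] that K_def by (auto simp: j_def)
    have sj: "s * s = j" "s \<ge> 0" using j by (auto simp: s_def)
    have s2: "s \<ge> 2 * c' / D" using jb(1)[OF that(1)] T unfolding s_def j_def by linarith
    have "D * s \<ge> D * (2 * c' / D)" using s2 D by (intro mult_left_mono) auto
    then have Ds: "D * s \<ge> 2 * c'" using D by simp
    have "D * j = (D * s) * s" using sj by (simp add: algebra_simps)
    also have "\<dots> \<ge> 2 * c' * s" using Ds sj by (intro mult_right_mono) auto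
    finally have A: "D * j \<ge> 2 * c' * s" .
    have "D * j \<ge> D * (2 * \<bar>E\<bar> / D)" using jb(2)[OF that(1)] D unfolding j_def by (intro mult_left_mono) auto
    then have B: "D * j \<ge> 2 * \<bar>E\<bar>" using D by simp
    have mu2: "(mu n)\<^sup>2 + mu n = c'^2 * j + c' * s"
      by (simp add: mu_def s_def j_def power_mult_distrib)
    have "- (F * x + E) \<ge> - (F * of_int n + E)" using that(3) F_pos by (simp add: mult_left_mono)
    also have "- (F * of_int n + E) = F * j - E" using j by simp
    finally have "- (F * x + E) \<ge> F * j - E" .
    moreover have "F * j - E \<ge> c'^2 * j + c' * s" using A B unfolding D_def by (simp add: algebra_simps)
    ultimately show ?thesis using mu2 by simp
  qed
  ultimately show ?thesis by blast
qed


theorem lemma2p2: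
  fixes F :: real and g :: "int \<Rightarrow> real"
  assumes F_pos: "F > 0"
    and liminf: "Liminf at_bot (\<lambda>n::int. ereal (g n / sqrt \<bar>real_of_int n\<bar>)) > ereal (- sqrt F)"
  shows "\<forall>E::real. \<exists>\<psi> :: real \<Rightarrow> real.
           L2_neg_halfline \<psi> \<and>
           (\<exists>x<0. \<psi> x \<noteq> 0) \<and>
           (\<forall>x. x < 0 \<and> x \<notin> \<int> \<longrightarrow>
               \<psi> differentiable (at x) \<and>
               (deriv \<psi> has_real_derivative (- (F * x + E) * \<psi> x)) (at x)) \<and>
           (\<forall>n::int. n < 0 \<longrightarrow> isCont \<psi> (real_of_int n)) \<and>
           (\<forall>n::int. n < 0 \<longrightarrow>
               ((\<lambda>\<epsilon>. deriv \<psi> (real_of_int n + \<epsilon>) - deriv \<psi> (real_of_int n - \<epsilon>))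
                  \<longlongrightarrow> g n * \<psi> (real_of_int n)) (at_right 0))"
proof
  fix E :: real
  have F0: "F \<noteq> 0" using F_pos by simp
  define y1 where "y1 x = S0 F 1 0 (x + E/F)" for x
  define y1' where "y1' x = S1 F 1 0 (x + E/F)" for x
  define y2 where "y2 x = S0 F 0 1 (x + E/F)" for x
  define y2' where "y2' x = S1 F 0 1 (x + E/F)" for x
  define q where "q x = - (F * x + E)" for x
  have dsh: "((\<lambda>x. x + E/F) has_real_derivative 1) (at x)" for x
    by (auto intro!: derivative_eq_intros)
  have dA: "((\<lambda>x. S0 F c0 c1 (x + E/F)) has_real_derivative S1 F c0 c1 (x + E/F)) (at x)" for c0 c1 x
    using DERIV_chain2[OF S0_deriv dsh] by simp
  have dB: "((\<lambda>x. S1 F c0 c1 (x + E/F)) has_real_derivative q x * S0 F c0 c1 (x + E/F)) (at x)" for c0 c1 x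
  proof -
    have "((\<lambda>x. S1 F c0 c1 (x + E/F)) has_real_derivative (- F * (x + E/F) * S0 F c0 c1 (x + E/F)) * 1) (at x)"
      by (rule DERIV_chain2[OF S1_deriv dsh])
    moreover have "- F * (x + E/F) * S0 F c0 c1 (x + E/F) * 1 = q x * S0 F c0 c1 (x + E/F)"
      using F0 by (simp add: q_def field_simps)
    ultimately show ?thesis by simp
  qed
  have d1: "\<And>x. (y1 has_real_derivative y1' x) (at x)" unfolding y1_def[abs_def] y1'_def by (rule dA)
  have d1': "\<And>x. (y1' has_real_derivative q x * y1 x) (at x)" unfolding y1'_def[abs_def] y1_def by (rule dB)
  have d2: "\<And>x. (y2 has_real_derivative y2' x) (at x)" unfolding y2_def[abs_def] y2'_def by (rule dA)
  have d2': "\<And>x. (y2' has_real_derivative q x * y2 x) (at x)" unfolding y2'_def[abs_def] y2_def by (rule dB)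
  have Wr: "y1 x * y2' x - y1' x * y2 x = 1" for x
  proof -
    define Wf where "Wf x = y1 x * y2' x - y1' x * y2 x" for x
    have "\<forall>x. (Wf has_real_derivative 0) (at x)"
    proof
      fix x
      have "(Wf has_real_derivative (y1 x * (q x * y2 x) + y1' x * y2' x) - (y1' x * y2' x + q x * y1 x * y2 x)) (at x)"
        unfolding Wf_def[abs_def] by (intro DERIV_diff DERIV_mult' d1 d1' d2 d2')
      then show "(Wf has_real_derivative 0) (at x)" by (simp add: algebra_simps)
    qed
    then have "Wf x = Wf (- E/F)" by (rule DERIV_isconst_all)
    also have "\<dots> = 1" by (simp add: Wf_def y1_def y2_def y1'_def y2'_def S_init)
    finally show ?thesis by (simp add: Wf_def)
  qed
  obtain K mu where KM: "K \<ge> (1::int)"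
     "\<forall>n x. n \<le> -K \<longrightarrow> of_int n - 1 \<le> x \<longrightarrow> x \<le> of_int n \<longrightarrow> - (F * x + E) \<ge> (mu n)\<^sup>2 + mu n"
     "\<forall>n. n \<le> -K \<longrightarrow> mu n \<ge> (1::real)"
     "\<forall>n. n \<le> -K \<longrightarrow> mu n + g n \<ge> 1"
    using params[OF F_pos liminf, of E] by blast
  interpret sys2 q y1 y1' y2 y2' g K mu
    by unfold_locales (use d1 d1' d2 d2' Wr KM in \<open>auto simp: q_def\<close>)
  obtain p where p: "p \<noteq> 0" "\<And>x y. x \<le> y \<Longrightarrow> y \<le> of_int (-K) \<Longrightarrow>
        0 \<le> psi p x \<and> exp (-x) * psi p x \<le> exp (-y) * psi p y"
    using exists_decaying by blast
  define \<psi> where "\<psi> = psi p"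
  have ode: "\<forall>x. x < 0 \<and> x \<notin> \<int> \<longrightarrow> \<psi> differentiable (at x) \<and>
               (deriv \<psi> has_real_derivative (- (F * x + E) * \<psi> x)) (at x)"
    using psi_ode unfolding \<psi>_def q_def by blast
  have cint: "\<forall>n::int. n < 0 \<longrightarrow> isCont \<psi> (real_of_int n)"
    using psi_cont_int unfolding \<psi>_def by simp
  have jump: "\<forall>n::int. n < 0 \<longrightarrow>
               ((\<lambda>\<epsilon>. deriv \<psi> (real_of_int n + \<epsilon>) - deriv \<psi> (real_of_int n - \<epsilon>))
                  \<longlongrightarrow> g n * \<psi> (real_of_int n)) (at_right 0)"
    using psi_jump unfolding \<psi>_def by simp
  have cont_at: "isCont \<psi> x" if xneg: "x < 0" for x
  proof (cases "x \<in> \<int>")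
    case True
    then obtain n where n: "x = of_int n" by (auto elim: Ints_cases)
    then show ?thesis using cint xneg by simp
  next
    case False
    then obtain D where "(\<psi> has_real_derivative D) (at x)"
      using ode xneg real_differentiable_def by blast
    then show ?thesis by (rule DERIV_isCont)
  qed
  have cont: "continuous_on {..<0} \<psi>"
    by (rule continuous_at_imp_continuous_on) (use cont_at in auto)
  have nontriv: "\<exists>x<0. \<psi> x \<noteq> 0"
  proof (rule ccontr)
    assume "\<not> (\<exists>x<0. \<psi> x \<noteq> 0)"
    then have z: "\<And>x. x < 0 \<Longrightarrow> psi p x = 0" unfolding \<psi>_def by auto
    have zz: "phi p (-1) z = 0" if "z \<in> {-1<..<0}" for z
      using z[of z] psi_eq[of "-1" z p] that by simp
    have "(phi p (-1) has_real_derivative 0) (at (-1/2))"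
      by (rule has_field_derivative_transform_within_open[OF DERIV_const, where S="{-1<..<0}"])
         (use zz in auto)
    then have "dphi p (-1) (-1/2) = 0" using phi_deriv DERIV_unique by blast
    moreover have "phi p (-1) (-1/2) = 0" using zz by simp
    ultimately have "p = 0" by (intro pc_zero_at[of p "-1" "-1/2"]) auto
    then show False using p(1) by simp
  qed
  have Sleb: "{..<0::real} \<in> sets lebesgue" by simp
  have meas: "\<psi> \<in> borel_measurable (restrict_space lebesgue {..<0})"
    using continuous_imp_measurable_on_sets_lebesgue[OF cont Sleb] .
  obtain M1 where M1: "\<And>x. x \<in> {- of_int K..-1/2} \<Longrightarrow> \<bar>\<psi> x\<bar> \<le> M1"
  proof -
    have "continuous_on {- of_int K..-1/2} \<psi>"
      by (rule continuous_on_subset[OF cont]) auto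
    then have "bounded (\<psi> ` {- of_int K..-1/2})"
      by (intro compact_imp_bounded compact_continuous_image) auto
    then obtain a where "\<forall>y\<in>\<psi> ` {- of_int K..-1/2}. \<bar>y\<bar> \<le> a" unfolding bounded_real by blast
    then show ?thesis by (intro that[of a]) auto
  qed
  obtain M2 where M2: "\<And>x. x \<in> {-1/2..0} \<Longrightarrow> \<bar>phi p (-1) x\<bar> \<le> M2"
  proof -
    have "continuous_on {-1/2..0} (phi p (-1))"
      by (intro continuous_at_imp_continuous_on ballI isCont_phi)
    then have "bounded (phi p (-1) ` {-1/2..0})"
      by (intro compact_imp_bounded compact_continuous_image) auto
    then obtain a where "\<forall>y\<in>phi p (-1) ` {-1/2..0}. \<bar>y\<bar> \<le> a" unfolding bounded_real by blast
    then show ?thesis by (intro that[of a]) auto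
  qed
  define P where "P = \<psi> (of_int (-K))"
  define M where "M = max M1 M2"
  define C where "C = exp (2 * of_int K) * (P\<^sup>2 + M\<^sup>2)"
  have bound: "norm ((\<psi> x)\<^sup>2) \<le> C * exp (2 * x)" if "x \<in> {..<0}" for x
  proof (cases "x \<le> of_int (-K)")
    case True
    have a: "0 \<le> \<psi> x" "exp (-x) * \<psi> x \<le> exp (of_int K) * P"
      using p(2)[OF True order_refl] unfolding \<psi>_def P_def by simp_all
    have "\<psi> x = exp x * (exp (-x) * \<psi> x)" by (simp add: exp_minus field_simps)
    also have "\<dots> \<le> exp x * (exp (of_int K) * P)" using a by (intro mult_left_mono) auto
    finally have b: "\<psi> x \<le> exp x * exp (of_int K) * P" by simp
    have "(\<psi> x)\<^sup>2 \<le> (exp x * exp (of_int K) * P)\<^sup>2" using a b by (intro power_mono) auto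
    also have "\<dots> = exp (2 * of_int K) * P\<^sup>2 * exp (2 * x)"
    proof -
      have "exp (2 * of_int K) * exp (2 * x) = (exp x * exp (of_int K))\<^sup>2"
        by (simp add: power2_eq_square exp_add[symmetric] algebra_simps)
      then show ?thesis by (simp add: power_mult_distrib)
    qed
    also have "\<dots> \<le> C * exp (2 * x)" unfolding C_def by (intro mult_right_mono mult_left_mono) auto
    finally show ?thesis by simp
  next
    case False
    have x0: "x < 0" using that by simp
    have "\<bar>\<psi> x\<bar> \<le> M"
    proof (cases "x \<le> -1/2")
      case True then show ?thesis using M1[of x] False by (simp add: M_def)
    next
      case False2: False
      have "\<psi> x = phi p (-1) x" unfolding \<psi>_def using x0 False2 by (intro psi_eq) auto
      then show ?thesis using M2[of x] x0 False2 by (simp add: M_def)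
    qed
    then have "(\<psi> x)\<^sup>2 \<le> M\<^sup>2" by (metis abs_ge_zero power2_abs power_mono)
    also have "\<dots> \<le> M\<^sup>2 * (exp (2 * of_int K) * exp (2 * x))"
    proof -
      have "exp (2 * of_int K) * exp (2 * x) = exp (2 * (x + of_int K))" by (simp add: exp_add[symmetric] algebra_simps)
      also have "\<dots> \<ge> 1" using False by simp
      finally have "1 \<le> exp (2 * of_int K) * exp (2 * x)" .
      from mult_left_mono[OF this, of "M\<^sup>2"] show ?thesis by simp
    qed
    also have "\<dots> \<le> C * exp (2 * x)" unfolding C_def by (simp add: algebra_simps mult_right_mono)
    finally show ?thesis by simp
  qed
  have integ: "set_integrable lebesgue {..<(0::real)} (\<lambda>x. (\<psi> x)\<^sup>2)"
  proof (rule measurable_bounded_by_integrable_imp_absolutely_integrable[OF _ Sleb _ bound])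
    show "(\<lambda>x. (\<psi> x)\<^sup>2) \<in> borel_measurable (lebesgue_on {..<0})"
      by (rule continuous_imp_measurable_on_sets_lebesgue[OF continuous_on_power[OF cont] Sleb])
    show "(\<lambda>x. C * exp (2 * x)) integrable_on {..<0}"
      using integrable_on_cmult_left[OF exp2_integrable, of C] by simp
  qed
  have "L2_neg_halfline \<psi>" unfolding L2_neg_halfline_def using meas integ by simp
  then show "\<exists>\<psi> :: real \<Rightarrow> real.
           L2_neg_halfline \<psi> \<and>
           (\<exists>x<0. \<psi> x \<noteq> 0) \<and>
           (\<forall>x. x < 0 \<and> x \<notin> \<int> \<longrightarrow>
               \<psi> differentiable (at x) \<and>
               (deriv \<psi> has_real_derivative (- (F * x + E) * \<psi> x)) (at x)) \<and>
           (\<forall>n::int. n < 0 \<longrightarrow> isCont \<psi> (real_of_int n)) \<and>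
           (\<forall>n::int. n < 0 \<longrightarrow>
               ((\<lambda>\<epsilon>. deriv \<psi> (real_of_int n + \<epsilon>) - deriv \<psi> (real_of_int n - \<epsilon>))
                  \<longlongrightarrow> g n * \<psi> (real_of_int n)) (at_right 0))"
    using nontriv ode cint jump by blast
qed

end
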